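(* Let $q\in\mathbb{C}$ with $0<|q|<1$ and $l,m,n,u\in\mathbb{N}$. Then \[ \sum_{k=0}^\infty\frac{q^{k^2} (q)_{l+m+n-k}} {(q)_k (q)_{l-k}(q)_{m-k}(q)_{n-k} (q)_{u+k}} =\sum_{k=-\infty}^\infty\frac{(-1)^k q^{(5k^2-k)/2} (q)_{l+m}(q)_{l+n}(q)_{m+n}(q)_u} {(q)_{l-k}(q)_{m-k}(q)_{n-k}(q)_{u-k}(q)_{l+k}(q)_{m+k}(q)_{n+k}(q)_{u+k}}, \] and \[ \sum_{k=0}^\infty\frac{q^{k^2+k} (q)_{l+m+n-k+1}} {(q)_k (q)_{l-k}(q)_{m-k}(q)_{n-k}(q)_{u+k+1}} =\sum_{k=-\infty}^\infty\frac{(-1)^k q^{(5k^2+3k)/2} (q)_{l+m+1}(q)_{l+n+1}(q)_{m+n+1}(q)_u} {(q)_{l-k}(q)_{m-k}(q)_{n-k}(q)_{u-k}(q)_{l+k+1}(q)_{m+k+1}(q)_{n+k+1}(q)_{u+k+1}}. \]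
   Context: $(q)_n=(q;q)_n=(1-q)(1-q^2)\cdots(1-q^n)$ for $n\ge0$ (with $(q)_0=1$), and $1/(q)_n=0$ for $n<0$. *)

theory Defs
  imports "HOL-Analysis.Analysis"
begin

text \<open>(q;q)_n for an integer index n; for n \<le> 0 this is the empty product 1.
  It is only ever used for n \<ge> 0 in a nonzero term.\<close>
definition qpoch :: "complex \<Rightarrow> int \<Rightarrow> complex" where
  "qpoch q n = (\<Prod>i\<in>{1..n}. 1 - q powi i)"

definition qinv :: "complex \<Rightarrow> int \<Rightarrow> complex" where
  "qinv q n = (if n < 0 then 0 else 1 / qpoch q n)"

end

theory Submission
  imports Defs
begin


locale qc =
  fixes q :: complex
  assumes qnz: "q \<noteq> 0" and qlt: "norm q < 1"
begin

lemma pw_ne1: "i \<ge> 1 \<Longrightarrow> 1 - q powi i \<noteq> 0"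
proof
  assume i: "i \<ge> 1" and h: "1 - q powi i = 0"
  have "q powi i = q ^ nat i" using i by (simp add: power_int_def)
  hence "norm (q powi i) = norm q ^ nat i" by (simp add: norm_power)
  also have "\<dots> < 1" using i qlt by (simp add: power_less_one_iff)
  finally show False using h by simp
qed

lemma qpoch_nz: "qpoch q n \<noteq> 0"
  unfolding qpoch_def using pw_ne1 by (auto simp: prod_zero_iff)

lemma qpoch_neg: "n \<le> 0 \<Longrightarrow> qpoch q n = 1"
  unfolding qpoch_def by simp

lemma qpoch_up: "n \<ge> 1 \<Longrightarrow> qpoch q n = (1 - q powi n) * qpoch q (n - 1)"
proof -
  assume n: "n \<ge> 1"
  have "{1..n} = insert n {1..n-1}" using n by auto
  thus ?thesis unfolding qpoch_def by simp
qed

lemma qinv_neg: "n < 0 \<Longrightarrow> qinv q n = 0"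
  unfolding qinv_def by simp

lemma qinv_qpoch: "n \<ge> 0 \<Longrightarrow> qpoch q n * qinv q n = 1"
  unfolding qinv_def using qpoch_nz by simp

lemma qinv_down: "qinv q (n - 1) = (1 - q powi n) * qinv q n"
proof (cases "n \<ge> 1")
  case True
  have "qpoch q n = (1 - q powi n) * qpoch q (n - 1)" using qpoch_up True .
  thus ?thesis using True pw_ne1[OF True] qpoch_nz[of "n-1"] qpoch_nz[of n]
    unfolding qinv_def by (simp add: field_simps)
next
  case False
  then show ?thesis by (cases "n = 0") (auto simp: qinv_def)
qed

end


lemma tele_int: "(a::int) \<le> b + 1 \<Longrightarrow> (\<Sum>i\<in>{a..b}. g (i+1) - g i) = g (b+1) - (g a :: complex)"
proof -
  assume "a \<le> b + 1"
  then obtain n where n: "b = a - 1 + int n" by (metis add.commute diff_add_cancel diff_le_eq zle_iff_zadd)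
  have "(\<Sum>i\<in>{a..a - 1 + int n}. g (i+1) - g i) = g (a - 1 + int n + 1) - g a" for n
  proof (induction n)
    case 0 then show ?case by simp
  next
    case (Suc n)
    have "{a..a - 1 + int (Suc n)} = insert (a + int n) {a..a - 1 + int n}" by auto
    then show ?case using Suc by (simp add: algebra_simps)
  qed
  thus ?thesis using n by simp
qed

context qc begin

lemma pw: "q powi (m + n) = q powi m * q powi n"
  using power_int_add qnz by blast
lemma pwd: "q powi (m - n) = q powi m / q powi n"
  using power_int_diff qnz by blast
lemma pwnz: "q powi m \<noteq> 0" using qnz by simp

definition vT :: "int \<Rightarrow> int \<Rightarrow> int \<Rightarrow> int \<Rightarrow> complex" where
  "vT K U a i = q powi (i*i + a*i) * qinv q (K-i) * qinv q (U-i) * qinv q i * qinv q (i+a)"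
definition vG :: "int \<Rightarrow> int \<Rightarrow> int \<Rightarrow> int \<Rightarrow> complex" where
  "vG K U a i = - (q powi (U - i)) * q powi (i*i + a*i) * qinv q (K-i) * qinv q (U-i) * qinv q (i-1) * qinv q (i+a-1)"

lemma vand_wz:
  "(1 - q powi U) * (1 - q powi (U+a)) * vT K U a i - (1 - q powi (K+U+a)) * vT K (U-1) a i
   = vG K U a (i+1) - vG K U a i"
proof -
  define B where "B = q powi (i*i + a*i) * qinv q (K-i) * qinv q (U-i) * qinv q i * qinv q (i+a)"
  define X where "X = q powi i"
  define Uq where "Uq = q powi U"
  define Kq where "Kq = q powi K"
  define Aq where "Aq = q powi a"
  have X: "X \<noteq> 0" unfolding X_def using pwnz .
  have i1: "qinv q (U - 1 - i) = (1 - Uq / X) * qinv q (U-i)"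
    using qinv_down[of "U-i"] by (simp add: X_def Uq_def pwd algebra_simps)
  have i2: "qinv q (K - (i+1)) = (1 - Kq / X) * qinv q (K-i)"
    using qinv_down[of "K-i"] by (simp add: X_def Kq_def pwd algebra_simps)
  have i3: "qinv q (U - (i+1)) = (1 - Uq / X) * qinv q (U-i)"
    using qinv_down[of "U-i"] by (simp add: X_def Uq_def pwd algebra_simps)
  have i4: "qinv q (i - 1) = (1 - X) * qinv q i"
    using qinv_down[of "i"] by (simp add: X_def)
  have i5: "qinv q (i + a - 1) = (1 - X * Aq) * qinv q (i+a)"
    using qinv_down[of "i+a"] by (simp add: X_def Aq_def pw)
  have p1: "q powi ((i+1)*(i+1) + a*(i+1)) = q powi (i*i + a*i) * (q * X * X * Aq)"
  proof -
    have "(i+1)*(i+1) + a*(i+1) = (i*i + a*i) + (1 + (i + (i + a)))" by (simp add: algebra_simps)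
    thus ?thesis by (simp only: pw) (simp add: X_def Aq_def mult_ac)
  qed
  have e1: "vT K U a i = B" unfolding vT_def B_def by simp
  have e2: "vT K (U-1) a i = (1 - Uq / X) * B" unfolding vT_def B_def
    by (simp add: i1 mult_ac)
  have e3: "vG K U a (i+1) = - (Uq / (X * q)) * (q * X * X * Aq) * (1 - Kq / X) * (1 - Uq / X) * B"
    unfolding vG_def B_def using i2 i3 p1
    by (simp add: pwd pw X_def Uq_def mult_ac)
  have e4: "vG K U a i = - (Uq / X) * (1 - X) * (1 - X * Aq) * B"
    unfolding vG_def B_def using i4 i5
    by (simp add: pwd X_def Uq_def mult_ac)
  show ?thesis
    unfolding e1 e2 e3 e4 using X qnz
    by (simp add: pw Uq_def[symmetric] Kq_def[symmetric] Aq_def[symmetric] field_simps)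
qed

lemma qinv0: "qinv q 0 = 1" unfolding qinv_def qpoch_def by simp

lemma sum_split_top: "(b::int) \<ge> a \<Longrightarrow> (\<Sum>i\<in>{a..b}. f i) = (\<Sum>i\<in>{a..b-1}. f i) + (f b :: complex)"
proof -
  assume "b \<ge> a"
  hence "{a..b} = insert b {a..b-1}" by auto
  thus ?thesis by (simp add: add.commute)
qed

lemma vand:
  assumes K: "K \<ge> 0" and a: "a \<ge> 0" and U: "U \<ge> 0"
  shows "(\<Sum>i\<in>{0..U}. vT K U a i) = qpoch q (K+U+a) * qinv q K * qinv q U * qinv q (K+a) * qinv q (U+a)"
proof -
  obtain n where n: "U = int n" using U by (metis nonneg_eq_int)
  have "(\<Sum>i\<in>{0..int n}. vT K (int n) a i) = qpoch q (K+int n+a) * qinv q K * qinv q (int n) * qinv q (K+a) * qinv q (int n+a)"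
  proof (induction n)
    case 0
    have "qpoch q (K+a) * qinv q (K+a) = 1" using qinv_qpoch K a by simp
    then show ?case by (simp add: vT_def qinv0 mult_ac)
  next
    case (Suc n)
    define V where "V = int n"
    have V: "V \<ge> 0" unfolding V_def by simp
    have SV: "int (Suc n) = V + 1" unfolding V_def by simp
    define R where "R W = qpoch q (K+W+a) * qinv q K * qinv q W * qinv q (K+a) * qinv q (W+a)" for W
    have IH: "(\<Sum>i\<in>{0..V}. vT K V a i) = R V" using Suc.IH unfolding V_def R_def .
    have tel: "(\<Sum>i\<in>{0..V+1}. (1 - q powi (V+1)) * (1 - q powi (V+1+a)) * vT K (V+1) a i - (1 - q powi (K+(V+1)+a)) * vT K (V+1-1) a i) = 0"
    proof -
      have "(\<Sum>i\<in>{0..V+1}. (1 - q powi (V+1)) * (1 - q powi (V+1+a)) * vT K (V+1) a i - (1 - q powi (K+(V+1)+a)) * vT K (V+1-1) a i)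
          = (\<Sum>i\<in>{0..V+1}. vG K (V+1) a (i+1) - vG K (V+1) a i)"
        by (rule sum.cong[OF refl], rule vand_wz)
      also have "\<dots> = vG K (V+1) a (V+1+1) - vG K (V+1) a 0" using V by (subst tele_int) auto
      also have "\<dots> = 0" by (simp add: vG_def qinv_neg)
      finally show ?thesis .
    qed
    have s2: "(\<Sum>i\<in>{0..V+1}. vT K V a i) = R V"
      using sum_split_top[of 0 "V+1" "vT K V a"] V IH by (simp add: vT_def qinv_neg)
    have rec: "(1 - q powi (V+1)) * (1 - q powi (V+1+a)) * (\<Sum>i\<in>{0..V+1}. vT K (V+1) a i) = (1 - q powi (K+(V+1)+a)) * R V"
      using tel s2 by (simp add: sum_subtractf sum_distrib_left[symmetric])
    have recR: "(1 - q powi (V+1)) * (1 - q powi (V+1+a)) * R (V+1) = (1 - q powi (K+(V+1)+a)) * R V"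
    proof -
      have "qpoch q (K+(V+1)+a) = (1 - q powi (K+(V+1)+a)) * qpoch q (K+V+a)"
        using qpoch_up[of "K+(V+1)+a"] K V a by (simp add: algebra_simps)
      moreover have "qinv q V = (1 - q powi (V+1)) * qinv q (V+1)" using qinv_down[of "V+1"] by simp
      moreover have "qinv q (V+a) = (1 - q powi (V+1+a)) * qinv q (V+1+a)" using qinv_down[of "V+1+a"] by simp
      ultimately show ?thesis unfolding R_def by (simp only:) (simp add: algebra_simps)
    qed
    have nz: "(1 - q powi (V+1)) * (1 - q powi (V+1+a)) \<noteq> 0" using pw_ne1 V a by simp
    have "(\<Sum>i\<in>{0..V+1}. vT K (V+1) a i) = R (V+1)"
      using rec recR nz by (metis mult_left_cancel)
    then show ?case unfolding SV R_def by simp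
  qed
  thus ?thesis using n by simp
qed

end

context qc begin

definition sT :: "int \<Rightarrow> int \<Rightarrow> int \<Rightarrow> int \<Rightarrow> int \<Rightarrow> complex" where
  "sT L M N a i = q powi (i*i + a*i) * qpoch q (L+M+N+a-i) * qinv q (L-i) * qinv q (M-i) * qinv q (N-i) * qinv q i * qinv q (i+a)"
definition sG :: "int \<Rightarrow> int \<Rightarrow> int \<Rightarrow> int \<Rightarrow> int \<Rightarrow> complex" where
  "sG L M N a i = - (q powi (N - i)) * q powi (i*i + a*i) * qpoch q (L+M+N+a-i) * qinv q (L-i) * qinv q (M-i) * qinv q (N-i) * qinv q (i-1) * qinv q (i+a-1)"

lemma saal_wz:
  assumes L: "L \<ge> 0" and M: "M \<ge> 0" and N: "N \<ge> 1" and a: "a \<ge> 0"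
  shows "(1 - q powi N) * (1 - q powi (N+a)) * sT L M N a i - (1 - q powi (L+N+a)) * (1 - q powi (M+N+a)) * sT L M (N-1) a i
   = sG L M N a (i+1) - sG L M N a i"
proof (cases "i < 0 \<or> i > L \<or> i > M \<or> i > N")
  case True
  then show ?thesis by (auto simp: sT_def sG_def qinv_neg)
next
  case False
  hence i0: "0 \<le> i" "i \<le> L" "i \<le> M" "i \<le> N" by auto
  define B where "B = q powi (i*i + a*i) * qpoch q (L+M+N+a-i-1) * qinv q (L-i) * qinv q (M-i) * qinv q (N-i) * qinv q i * qinv q (i+a)"
  define X where "X = q powi i"
  define Lq where "Lq = q powi L"
  define Mq where "Mq = q powi M"
  define Nq where "Nq = q powi N"
  define Aq where "Aq = q powi a"
  have X: "X \<noteq> 0" unfolding X_def using pwnz .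
  have Sq: "q powi (L+M+N+a-i) = Lq * Mq * Nq * Aq / X"
    by (simp add: pw pwd Lq_def Mq_def Nq_def Aq_def X_def)
  have c1: "qpoch q (L+M+N+a-i) = (1 - Lq * Mq * Nq * Aq / X) * qpoch q (L+M+N+a-i-1)"
    using qpoch_up[of "L+M+N+a-i"] i0 L M N a Sq by simp
  have c2: "qpoch q (L+M+(N-1)+a-i) = qpoch q (L+M+N+a-i-1)" by (simp add: algebra_simps)
  have c3: "qpoch q (L+M+N+a-(i+1)) = qpoch q (L+M+N+a-i-1)" by (simp add: algebra_simps)
  have i1: "qinv q (N - 1 - i) = (1 - Nq / X) * qinv q (N-i)"
    using qinv_down[of "N-i"] by (simp add: X_def Nq_def pwd algebra_simps)
  have i2: "qinv q (L - (i+1)) = (1 - Lq / X) * qinv q (L-i)"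
    using qinv_down[of "L-i"] by (simp add: X_def Lq_def pwd algebra_simps)
  have i3: "qinv q (M - (i+1)) = (1 - Mq / X) * qinv q (M-i)"
    using qinv_down[of "M-i"] by (simp add: X_def Mq_def pwd algebra_simps)
  have i3': "qinv q (N - (i+1)) = (1 - Nq / X) * qinv q (N-i)"
    using qinv_down[of "N-i"] by (simp add: X_def Nq_def pwd algebra_simps)
  have i4: "qinv q (i - 1) = (1 - X) * qinv q i"
    using qinv_down[of "i"] by (simp add: X_def)
  have i5: "qinv q (i + a - 1) = (1 - X * Aq) * qinv q (i+a)"
    using qinv_down[of "i+a"] by (simp add: X_def Aq_def pw)
  have p1: "q powi ((i+1)*(i+1) + a*(i+1)) = q powi (i*i + a*i) * (q * X * X * Aq)"
  proof -
    have "(i+1)*(i+1) + a*(i+1) = (i*i + a*i) + (1 + (i + (i + a)))" by (simp add: algebra_simps)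
    thus ?thesis by (simp only: pw) (simp add: X_def Aq_def mult_ac)
  qed
  have e1: "sT L M N a i = (1 - Lq * Mq * Nq * Aq / X) * B" unfolding sT_def B_def using c1
    by (simp add: mult_ac)
  have e2: "sT L M (N-1) a i = (1 - Nq / X) * B" unfolding sT_def B_def using c2 i1
    by (simp add: mult_ac)
  have e3: "sG L M N a (i+1) = - (Nq / (X * q)) * (q * X * X * Aq) * (1 - Lq / X) * (1 - Mq / X) * (1 - Nq / X) * B"
    unfolding sG_def B_def using i2 i3 i3' p1 c3
    by (simp add: pwd pw X_def Nq_def mult_ac)
  have e4: "sG L M N a i = - (Nq / X) * (1 - Lq * Mq * Nq * Aq / X) * (1 - X) * (1 - X * Aq) * B"
    unfolding sG_def B_def using i4 i5 c1
    by (simp add: pwd X_def Nq_def mult_ac)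
  show ?thesis
    unfolding e1 e2 e3 e4 using X qnz
    by (simp add: pw Lq_def[symmetric] Mq_def[symmetric] Nq_def[symmetric] Aq_def[symmetric] field_simps)
qed

lemma saal:
  assumes L: "L \<ge> 0" and M: "M \<ge> 0" and a: "a \<ge> 0" and N: "N \<ge> 0"
  shows "(\<Sum>i\<in>{0..N}. sT L M N a i) = qpoch q (L+M+a) * qpoch q (L+N+a) * qpoch q (M+N+a)
     * qinv q L * qinv q M * qinv q N * qinv q (L+a) * qinv q (M+a) * qinv q (N+a)"
proof -
  define R where "R W = qpoch q (L+M+a) * qpoch q (L+W+a) * qpoch q (M+W+a)
     * qinv q L * qinv q M * qinv q W * qinv q (L+a) * qinv q (M+a) * qinv q (W+a)" for W
  obtain n where n: "N = int n" using N by (metis nonneg_eq_int)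
  have "(\<Sum>i\<in>{0..int n}. sT L M (int n) a i) = R (int n)"
  proof (induction n)
    case 0
    have "qpoch q (L+a) * qinv q (L+a) = 1" using qinv_qpoch L a by simp
    moreover have "qpoch q (M+a) * qinv q (M+a) = 1" using qinv_qpoch M a by simp
    moreover have "R 0 = (qpoch q (L+M+a) * qinv q L * qinv q M * qinv q a) * (qpoch q (L+a) * qinv q (L+a)) * (qpoch q (M+a) * qinv q (M+a))"
      unfolding R_def by (simp add: qinv0 mult_ac)
    ultimately show ?case by (simp add: sT_def qinv0 mult_ac)
  next
    case (Suc n)
    define V where "V = int n"
    have V: "V \<ge> 0" unfolding V_def by simp
    have SV: "int (Suc n) = V + 1" unfolding V_def by simp
    have IH: "(\<Sum>i\<in>{0..V}. sT L M V a i) = R V" using Suc.IH unfolding V_def .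
    have tel: "(\<Sum>i\<in>{0..V+1}. (1 - q powi (V+1)) * (1 - q powi (V+1+a)) * sT L M (V+1) a i - (1 - q powi (L+(V+1)+a)) * (1 - q powi (M+(V+1)+a)) * sT L M (V+1-1) a i) = 0"
    proof -
      have "(\<Sum>i\<in>{0..V+1}. (1 - q powi (V+1)) * (1 - q powi (V+1+a)) * sT L M (V+1) a i - (1 - q powi (L+(V+1)+a)) * (1 - q powi (M+(V+1)+a)) * sT L M (V+1-1) a i)
          = (\<Sum>i\<in>{0..V+1}. sG L M (V+1) a (i+1) - sG L M (V+1) a i)"
        by (rule sum.cong[OF refl], rule saal_wz) (use L M a V in auto)
      also have "\<dots> = sG L M (V+1) a (V+1+1) - sG L M (V+1) a 0" using V by (subst tele_int) auto
      also have "\<dots> = 0" by (simp add: sG_def qinv_neg)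
      finally show ?thesis .
    qed
    have s2: "(\<Sum>i\<in>{0..V+1}. sT L M V a i) = R V"
      using sum_split_top[of 0 "V+1" "sT L M V a"] V IH by (simp add: sT_def qinv_neg)
    have rec: "(1 - q powi (V+1)) * (1 - q powi (V+1+a)) * (\<Sum>i\<in>{0..V+1}. sT L M (V+1) a i) = (1 - q powi (L+(V+1)+a)) * (1 - q powi (M+(V+1)+a)) * R V"
      using tel s2 by (simp add: sum_subtractf sum_distrib_left[symmetric])
    have recR: "(1 - q powi (V+1)) * (1 - q powi (V+1+a)) * R (V+1) = (1 - q powi (L+(V+1)+a)) * (1 - q powi (M+(V+1)+a)) * R V"
    proof -
      have "qpoch q (L+(V+1)+a) = (1 - q powi (L+(V+1)+a)) * qpoch q (L+V+a)"
        using qpoch_up[of "L+(V+1)+a"] L V a by (simp add: algebra_simps)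
      moreover have "qpoch q (M+(V+1)+a) = (1 - q powi (M+(V+1)+a)) * qpoch q (M+V+a)"
        using qpoch_up[of "M+(V+1)+a"] M V a by (simp add: algebra_simps)
      moreover have "qinv q V = (1 - q powi (V+1)) * qinv q (V+1)" using qinv_down[of "V+1"] by simp
      moreover have "qinv q (V+a) = (1 - q powi (V+1+a)) * qinv q (V+1+a)" using qinv_down[of "V+1+a"] by simp
      ultimately show ?thesis unfolding R_def by (simp only:) (simp add: algebra_simps)
    qed
    have nz: "(1 - q powi (V+1)) * (1 - q powi (V+1+a)) \<noteq> 0" using pw_ne1 V a by simp
    have "(\<Sum>i\<in>{0..V+1}. sT L M (V+1) a i) = R (V+1)"
      using rec recR nz by (metis mult_left_cancel)
    then show ?case unfolding SV .
  qed
  thus ?thesis using n unfolding R_def by simp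
qed

end


lemma sum_shift_int: "(\<Sum>i\<in>{a..b}. f (i + c)) = (\<Sum>j\<in>{a+c..b+c}. (f j::complex))" for a b c :: int
  by (rule sum.reindex_bij_witness[of _ "\<lambda>j. j - c" "\<lambda>i. i + c"]) auto

lemma div2_lin: "even (x::int) \<Longrightarrow> even y \<Longrightarrow> (x + y + 2*z) div 2 = x div 2 + y div 2 + z"
  by (auto elim!: evenE)

lemma even_sq: "even (j*j - j :: int)"
  by (cases "even j") auto

lemma m1_diff: "(-1::complex) powi (m - n) = (-1) powi m * (-1) powi n"
proof -
  have d: "(-1::complex) powi n = 1 \<or> (-1::complex) powi n = -1"
    unfolding power_int_def by (auto simp: minus_one_power_iff)
  have "(-1::complex) powi (m-n) = (-1) powi m / (-1) powi n" by (rule power_int_diff) simp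
  thus ?thesis using d by auto
qed

context qc begin

definition qbt :: "complex \<Rightarrow> int \<Rightarrow> int \<Rightarrow> complex" where
  "qbt z n s = (-1) powi s * q powi ((s * s - s) div 2) * qpoch q n * qinv q s * qinv q (n - s) * z powi s"

lemma qbt_pascal:
  assumes n: "n \<ge> 0" and z: "z \<noteq> 0"
  shows "qbt z (n+1) s = qbt z n s - z * q powi n * qbt z n (s-1)"
proof -
  define Bs where "Bs = (-1) powi s * q powi ((s * s - s) div 2) * qpoch q n * qinv q s * qinv q (n+1-s) * z powi s"
  define Y where "Y = q powi s"
  define Nq where "Nq = q powi n"
  have Y: "Y \<noteq> 0" unfolding Y_def using pwnz .
  have a1: "qpoch q (n+1) = (1 - q * Nq) * qpoch q n"
    using qpoch_up[of "n+1"] n by (simp add: pw Nq_def mult_ac)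
  have a2: "qinv q (n - s) = (1 - q * Nq / Y) * qinv q (n+1-s)"
    using qinv_down[of "n+1-s"] by (simp add: pw pwd Nq_def Y_def mult_ac)
  have a3: "qinv q (s - 1) = (1 - Y) * qinv q s"
    using qinv_down[of s] by (simp add: Y_def)
  have a4: "qinv q (n - (s-1)) = qinv q (n+1-s)" by (simp add: algebra_simps)
  have a5: "(-1::complex) powi (s-1) = - ((-1) powi s)"
    using m1_diff[of s 1] by simp
  have a6: "q powi (((s-1) * (s-1) - (s-1)) div 2) = q powi ((s * s - s) div 2) * q / Y"
  proof -
    have "((s-1) * (s-1) - (s-1)) div 2 = (s * s - s) div 2 - s + 1"
    proof -
      have "(s-1) * (s-1) - (s-1) = (s * s - s) + 2 * (1 - s)" by (simp add: algebra_simps)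
      thus ?thesis using div2_lin[OF even_sq[of s], of 0 "1-s"] by simp
    qed
    thus ?thesis by (simp add: pw pwd Y_def)
  qed
  have a7: "z powi (s-1) = z powi s / z" using z by (simp add: power_int_diff)
  have e1: "qbt z (n+1) s = (1 - q * Nq) * Bs" unfolding qbt_def Bs_def using a1 by (simp add: mult_ac)
  have e2: "qbt z n s = (1 - q * Nq / Y) * Bs" unfolding qbt_def Bs_def using a2 by (simp add: mult_ac)
  have e3: "qbt z n (s-1) = - (q / Y) * (1 - Y) / z * Bs" unfolding qbt_def Bs_def
    using a3 a4 a5 a6 a7 by (simp add: mult_ac)
  show ?thesis unfolding e1 e2 e3 using Y z by (simp add: Nq_def[symmetric] field_simps)
qed

lemma qbinom:
  assumes z: "z \<noteq> 0"
  shows "(\<Prod>i<n. 1 - z * q ^ i) = (\<Sum>s\<in>{0..int n}. qbt z (int n) s)"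
proof (induction n)
  case 0
  then show ?case by (simp add: qbt_def qinv0 qpoch_neg)
next
  case (Suc n)
  define m where "m = int n"
  have m: "m \<ge> 0" unfolding m_def by simp
  have "(\<Sum>s\<in>{0..m+1}. qbt z (m+1) s) = (\<Sum>s\<in>{0..m+1}. qbt z m s) - z * q powi m * (\<Sum>s\<in>{0..m+1}. qbt z m (s-1))"
    using qbt_pascal[OF m z] by (simp add: sum_subtractf sum_distrib_left)
  also have "(\<Sum>s\<in>{0..m+1}. qbt z m s) = (\<Sum>s\<in>{0..m}. qbt z m s)"
    using sum_split_top[of 0 "m+1" "qbt z m"] m by (simp add: qbt_def qinv_neg)
  also have "(\<Sum>s\<in>{0..m+1}. qbt z m (s-1)) = (\<Sum>s\<in>{-1..m}. qbt z m s)"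
    by (rule sum.reindex_bij_witness[of _ "\<lambda>j. j + 1" "\<lambda>i. i - 1"]) auto
  also have "\<dots> = (\<Sum>s\<in>{0..m}. qbt z m s)"
  proof -
    have "{-1..m} = insert (-1) {0..m}" using m by auto
    thus ?thesis by (simp add: qbt_def qinv_neg)
  qed
  finally have "(\<Sum>s\<in>{0..m+1}. qbt z (m+1) s) = (\<Sum>s\<in>{0..m}. qbt z m s) * (1 - z * q ^ n)"
    by (simp add: m_def algebra_simps)
  then show ?case using Suc.IH by (simp add: m_def add.commute)
qed

end

context qc begin

lemma unitU:
  assumes j: "j \<ge> 0" and e: "0 \<le> e" "e \<le> 1"
  shows "(\<Sum>r\<in>{-j-e..j}. (-1) powi r * q powi ((r * r - r) div 2) * qinv q (j-r) * qinv q (j+r+e)) = (if j = 0 then 1 else 0)"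
proof -
  define n where "n = 2*j+e"
  have n: "n \<ge> 0" using j e unfolding n_def by simp
  define z where "z = q powi (1-j)"
  have z: "z \<noteq> 0" unfolding z_def using pwnz .
  define C where "C = (-1) powi j * q powi ((j * j - j) div 2) * qinv q n"
  have "(\<Sum>r\<in>{-j-e..j}. (-1) powi r * q powi ((r * r - r) div 2) * qinv q (j-r) * qinv q (j+r+e))
      = (\<Sum>s\<in>{0..n}. (-1) powi (j-s) * q powi (((j-s) * (j-s) - (j-s)) div 2) * qinv q (j-(j-s)) * qinv q (j+(j-s)+e))"
    by (rule sum.reindex_bij_witness[of _ "\<lambda>s. j - s" "\<lambda>r. j - r"]) (auto simp: n_def)
  also have "\<dots> = (\<Sum>s\<in>{0..n}. C * qbt z n s)"
  proof (rule sum.cong[OF refl])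
    fix s assume s: "s \<in> {0..n}"
    have ex: "((j-s) * (j-s) - (j-s)) div 2 = (j * j - j) div 2 + (s * s - s) div 2 + (1-j)* s"
    proof -
      have hh: "(j-s) * (j-s) - (j-s) = (j * j - j) + (s * s - s) + 2*((1-j)* s)" by (simp add: algebra_simps)
      show ?thesis unfolding hh by (rule div2_lin[OF even_sq even_sq])
    qed
    have zp: "q powi ((1-j)* s) = z powi s" unfolding z_def by (simp add: power_int_mult)
    have i1: "qinv q (j+(j-s)+e) = qinv q (n - s)" by (simp add: n_def algebra_simps)
    have pn: "qpoch q n * qinv q n = 1" using qinv_qpoch n by simp
    have A: "(-1) powi (j-s) * q powi (((j-s) * (j-s) - (j-s)) div 2) * qinv q (j-(j-s)) * qinv q (j+(j-s)+e)
        = ((-1) powi j * (-1) powi s) * (q powi ((j * j - j) div 2) * q powi ((s * s - s) div 2) * z powi s) * qinv q s * qinv q (n-s)"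
      unfolding m1_diff ex i1 by (simp add: pw zp)
    have B: "C * qbt z n s = ((-1) powi j * (-1) powi s) * (q powi ((j * j - j) div 2) * q powi ((s * s - s) div 2) * z powi s) * qinv q s * qinv q (n-s) * (qpoch q n * qinv q n)" 
      unfolding C_def qbt_def by (simp add: mult_ac)
    show "(-1) powi (j-s) * q powi (((j-s) * (j-s) - (j-s)) div 2) * qinv q (j-(j-s)) * qinv q (j+(j-s)+e)
        = C * qbt z n s" using A B pn by simp
  qed
  also have "\<dots> = C * (\<Prod>i<nat n. 1 - z * q ^ i)"
    using qbinom[OF z, of "nat n"] n by (simp add: sum_distrib_left)
  also have "\<dots> = (if j = 0 then 1 else 0)"
  proof (cases "j = 0")
    case True
    have zq: "z = q" unfolding z_def True by simp
    show ?thesis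
    proof (cases "e = 0")
      case True
      then show ?thesis using \<open>j = 0\<close> by (simp add: C_def n_def qinv0)
    next
      case False
      hence "e = 1" using e by simp
      moreover have "qpoch q 1 = 1 - q" unfolding qpoch_def by simp
      moreover have "qpoch q 1 * qinv q 1 = 1" using qinv_qpoch by simp
      ultimately show ?thesis using \<open>j = 0\<close> zq by (simp add: C_def n_def mult_ac)
    qed
  next
    case False
    hence j1: "j \<ge> 1" using j by simp
    have "nat (j-1) \<in> {..<nat n}" using j1 e unfolding n_def by simp
    moreover have "1 - z * q ^ nat (j-1) = 0"
    proof -
      have "q ^ nat (j-1) = q powi (j-1)" using j1 by (simp add: power_int_def)
      hence "z * q ^ nat (j-1) = q powi ((1-j) + (j-1))" unfolding z_def by (simp only: pw)
      thus ?thesis by simp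
    qed
    ultimately have "(\<Prod>i<nat n. 1 - z * q ^ i) = 0" by (metis (no_types, lifting) finite_lessThan prod_zero)
    thus ?thesis using False by simp
  qed
  finally show ?thesis .
qed

end

context qc begin

lemma sq_shift: "q powi ((i+r) * (i+r) + e*(i+r)) = q powi (r * r + e*r) * q powi (i * i + (2*r+e)*i)"
proof -
  have "(i+r) * (i+r) + e*(i+r) = (r * r + e*r) + (i * i + (2*r+e)*i)" by (simp add: algebra_simps)
  thus ?thesis by (simp only: pw)
qed

lemma VV0:
  assumes k: "k \<ge> 0" and u: "u \<ge> 0" and e: "0 \<le> e" "e \<le> 1" and r: "2*r+e \<ge> 0"
  shows "(\<Sum>j\<in>{0..u}. q powi (j * j + e*j) * qinv q (k-j) * qinv q (u-j) * qinv q (j-r) * qinv q (j+r+e))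
       = q powi (r * r + e*r) * qpoch q (k+u+e) * qinv q (k-r) * qinv q (u-r) * qinv q (k+r+e) * qinv q (u+r+e)"
proof -
  have r0: "r \<ge> 0" using r e by simp
  show ?thesis
  proof (cases "k < r \<or> u < r")
    case True
    have "(\<Sum>j\<in>{0..u}. q powi (j * j + e*j) * qinv q (k-j) * qinv q (u-j) * qinv q (j-r) * qinv q (j+r+e)) = 0"
    proof (rule sum.neutral, rule ballI)
      fix j assume "j \<in> {0..u}"
      thus "q powi (j * j + e*j) * qinv q (k-j) * qinv q (u-j) * qinv q (j-r) * qinv q (j+r+e) = 0"
        using True by (cases "j < r") (auto simp: qinv_neg)
    qed
    then show ?thesis using True by (auto simp: qinv_neg)
  next
    case False
    hence kr: "k - r \<ge> 0" and ur: "u - r \<ge> 0" by auto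
    have V: "(\<Sum>i\<in>{0..u-r}. vT (k-r) (u-r) (2*r+e) i) = qpoch q ((k-r)+(u-r)+(2*r+e)) * qinv q (k-r) * qinv q (u-r) * qinv q ((k-r)+(2*r+e)) * qinv q ((u-r)+(2*r+e))"
      by (rule vand[OF kr r ur])
    define f where "f j = q powi (j * j + e*j) * qinv q (k-j) * qinv q (u-j) * qinv q (j-r) * qinv q (j+r+e)" for j
    have "(\<Sum>j\<in>{0..u}. f j) = (\<Sum>j\<in>{r..u}. f j)"
    proof (rule sum.mono_neutral_right)
      show "\<forall>j\<in>{0..u} - {r..u}. f j = 0" by (auto simp: f_def qinv_neg)
    qed (use r0 in auto)
    also have "\<dots> = (\<Sum>i\<in>{0..u-r}. f (i + r))"
      by (rule sum.reindex_bij_witness[of _ "\<lambda>i. i + r" "\<lambda>j. j - r"]) auto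
    also have "\<dots> = (\<Sum>i\<in>{0..u-r}. q powi (r * r + e*r) * vT (k-r) (u-r) (2*r+e) i)"
    proof (rule sum.cong[OF refl])
      fix i
      have a1: "k - (i+r) = k - r - i" "u - (i+r) = u - r - i" "i + r - r = i" "i + r + r + e = i + (2*r+e)" by simp_all
      show "f (i + r) = q powi (r * r + e*r) * vT (k-r) (u-r) (2*r+e) i"
        unfolding f_def vT_def sq_shift a1 by (simp add: mult_ac)
    qed
    also have "\<dots> = q powi (r * r + e*r) * (\<Sum>i\<in>{0..u-r}. vT (k-r) (u-r) (2*r+e) i)"
      by (simp add: sum_distrib_left)
    also have "\<dots> = q powi (r * r + e*r) * qpoch q (k+u+e) * qinv q (k-r) * qinv q (u-r) * qinv q (k+r+e) * qinv q (u+r+e)"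
      unfolding V by (simp add: algebra_simps)
    finally show ?thesis unfolding f_def .
  qed
qed

lemma VV:
  assumes k: "k \<ge> 0" and u: "u \<ge> 0" and e: "0 \<le> e" "e \<le> 1"
  shows "(\<Sum>j\<in>{0..u}. q powi (j * j + e*j) * qinv q (k-j) * qinv q (u-j) * qinv q (j-r) * qinv q (j+r+e))
       = q powi (r * r + e*r) * qpoch q (k+u+e) * qinv q (k-r) * qinv q (u-r) * qinv q (k+r+e) * qinv q (u+r+e)"
proof (cases "2*r+e \<ge> 0")
  case True
  then show ?thesis using VV0 k u e by blast
next
  case False
  define r' where "r' = -r-e"
  have r': "2*r'+e \<ge> 0" using False unfolding r'_def by simp
  note H = VV0[OF k u e r']
  have a: "j - r' = j + r + e" "j + r' + e = j - r" "k - r' = k + r + e" "u - r' = u + r + e"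
     "k + r' + e = k - r" "u + r' + e = u - r" "r' * r' + e * r' = r * r + e * r" for j
    unfolding r'_def by (simp_all add: algebra_simps)
  show ?thesis using H unfolding a by (simp add: mult_ac)
qed

lemma BB0:
  assumes l: "l \<ge> 0" and m: "m \<ge> 0" and n: "n \<ge> 0" and e: "0 \<le> e" "e \<le> 1" and r: "2*r+e \<ge> 0"
  shows "(\<Sum>k\<in>{0..n}. q powi (k * k + e*k) * qpoch q (l+m+n+e-k) * qinv q (l-k) * qinv q (m-k) * qinv q (n-k) * qinv q (k-r) * qinv q (k+r+e))
       = q powi (r * r + e*r) * qpoch q (l+m+e) * qpoch q (l+n+e) * qpoch q (m+n+e)
         * qinv q (l-r) * qinv q (m-r) * qinv q (n-r) * qinv q (l+r+e) * qinv q (m+r+e) * qinv q (n+r+e)"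
proof -
  have r0: "r \<ge> 0" using r e by simp
  define f where "f k = q powi (k * k + e*k) * qpoch q (l+m+n+e-k) * qinv q (l-k) * qinv q (m-k) * qinv q (n-k) * qinv q (k-r) * qinv q (k+r+e)" for k
  show ?thesis
  proof (cases "l < r \<or> m < r \<or> n < r")
    case True
    have "(\<Sum>k\<in>{0..n}. f k) = 0"
    proof (rule sum.neutral, rule ballI)
      fix k assume "k \<in> {0..n}"
      thus "f k = 0" using True unfolding f_def by (cases "k < r") (auto simp: qinv_neg)
    qed
    then show ?thesis using True unfolding f_def by (auto simp: qinv_neg)
  next
    case False
    hence lr: "l - r \<ge> 0" and mr: "m - r \<ge> 0" and nr: "n - r \<ge> 0" by auto
    have S: "(\<Sum>i\<in>{0..n-r}. sT (l-r) (m-r) (n-r) (2*r+e) i) = qpoch q ((l-r)+(m-r)+(2*r+e)) * qpoch q ((l-r)+(n-r)+(2*r+e)) * qpoch q ((m-r)+(n-r)+(2*r+e))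
     * qinv q (l-r) * qinv q (m-r) * qinv q (n-r) * qinv q ((l-r)+(2*r+e)) * qinv q ((m-r)+(2*r+e)) * qinv q ((n-r)+(2*r+e))"
      by (rule saal[OF lr mr r nr])
    have "(\<Sum>k\<in>{0..n}. f k) = (\<Sum>k\<in>{r..n}. f k)"
    proof (rule sum.mono_neutral_right)
      show "\<forall>k\<in>{0..n} - {r..n}. f k = 0" by (auto simp: f_def qinv_neg)
    qed (use r0 in auto)
    also have "\<dots> = (\<Sum>i\<in>{0..n-r}. f (i + r))"
      by (rule sum.reindex_bij_witness[of _ "\<lambda>i. i + r" "\<lambda>j. j - r"]) auto
    also have "\<dots> = (\<Sum>i\<in>{0..n-r}. q powi (r * r + e*r) * sT (l-r) (m-r) (n-r) (2*r+e) i)"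
    proof (rule sum.cong[OF refl])
      fix i
      have a1: "l - (i+r) = l - r - i" "m - (i+r) = m - r - i" "n - (i+r) = n - r - i" "i + r - r = i" "i + r + r + e = i + (2*r+e)"
        "l+m+n+e-(i+r) = (l-r)+(m-r)+(n-r)+(2*r+e)-i" by (simp_all add: algebra_simps)
      show "f (i + r) = q powi (r * r + e*r) * sT (l-r) (m-r) (n-r) (2*r+e) i"
        unfolding f_def sT_def sq_shift a1 by (simp add: mult_ac)
    qed
    also have "\<dots> = q powi (r * r + e*r) * (\<Sum>i\<in>{0..n-r}. sT (l-r) (m-r) (n-r) (2*r+e) i)"
      by (simp add: sum_distrib_left)
    also have "\<dots> = q powi (r * r + e*r) * qpoch q (l+m+e) * qpoch q (l+n+e) * qpoch q (m+n+e)
         * qinv q (l-r) * qinv q (m-r) * qinv q (n-r) * qinv q (l+r+e) * qinv q (m+r+e) * qinv q (n+r+e)"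
      unfolding S by (simp add: algebra_simps)
    finally show ?thesis unfolding f_def .
  qed
qed

lemma BB:
  assumes l: "l \<ge> 0" and m: "m \<ge> 0" and n: "n \<ge> 0" and e: "0 \<le> e" "e \<le> 1"
  shows "(\<Sum>k\<in>{0..n}. q powi (k * k + e*k) * qpoch q (l+m+n+e-k) * qinv q (l-k) * qinv q (m-k) * qinv q (n-k) * qinv q (k-r) * qinv q (k+r+e))
       = q powi (r * r + e*r) * qpoch q (l+m+e) * qpoch q (l+n+e) * qpoch q (m+n+e)
         * qinv q (l-r) * qinv q (m-r) * qinv q (n-r) * qinv q (l+r+e) * qinv q (m+r+e) * qinv q (n+r+e)"
proof (cases "2*r+e \<ge> 0")
  case True
  then show ?thesis using BB0 l m n e by blast
next
  case False
  define r' where "r' = -r-e"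
  have r': "2*r'+e \<ge> 0" using False unfolding r'_def by simp
  note H = BB0[OF l m n e r']
  have a: "k - r' = k + r + e" "k + r' + e = k - r" "l - r' = l + r + e" "m - r' = m + r + e" "n - r' = n + r + e"
     "l + r' + e = l - r" "m + r' + e = m - r" "n + r' + e = n - r" "r' * r' + e * r' = r * r + e * r" for k
    unfolding r'_def by (simp_all add: algebra_simps)
  show ?thesis using H unfolding a by (simp add: mult_ac)
qed

end

context qc begin

lemma unitU': 
  assumes j: "0 \<le> j" "j \<le> u" and e: "0 \<le> e" "e \<le> 1"
  shows "(\<Sum>r\<in>{-u-1..u}. (-1) powi r * q powi ((r * r - r) div 2) * qinv q (j-r) * qinv q (j+r+e)) = (if j = 0 then 1 else 0)"
proof -
  have "(\<Sum>r\<in>{-u-1..u}. (-1) powi r * q powi ((r * r - r) div 2) * qinv q (j-r) * qinv q (j+r+e))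
      = (\<Sum>r\<in>{-j-e..j}. (-1) powi r * q powi ((r * r - r) div 2) * qinv q (j-r) * qinv q (j+r+e))"
    by (rule sum.mono_neutral_left[symmetric]) (use j e in \<open>auto simp: qinv_neg\<close>)
  thus ?thesis using unitU[OF j(1) e] by simp
qed

lemma MAIN:
  assumes l: "l \<ge> 0" and m: "m \<ge> 0" and n: "n \<ge> 0" and u: "u \<ge> 0" and e: "0 \<le> e" "e \<le> 1"
  shows "(\<Sum>k\<in>{0..n}. q powi (k * k + e*k) * qpoch q (l+m+n+e-k) * qinv q (l-k) * qinv q (m-k) * qinv q (n-k) * qinv q k * qinv q (u+k+e))
   = (\<Sum>r\<in>{-u-1..u}. ((-1) powi r * q powi ((r * r - r) div 2)) * q powi (r * r + e*r) * q powi (r * r + e*r)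
       * qpoch q (l+m+e) * qpoch q (l+n+e) * qpoch q (m+n+e) * qpoch q u
       * qinv q (l-r) * qinv q (m-r) * qinv q (n-r) * qinv q (u-r) * qinv q (l+r+e) * qinv q (m+r+e) * qinv q (n+r+e) * qinv q (u+r+e))"
proof -
  define g where "g r = (-1) powi r * q powi ((r * r - r) div 2)" for r :: int
  define w where "w r = q powi (r * r + e*r)" for r :: int
  define c where "c k = q powi (k * k + e*k) * qpoch q (l+m+n+e-k) * qinv q (l-k) * qinv q (m-k) * qinv q (n-k)" for k
  define D where "D r = qpoch q (l+m+e) * qpoch q (l+n+e) * qpoch q (m+n+e)
         * qinv q (l-r) * qinv q (m-r) * qinv q (n-r) * qinv q (l+r+e) * qinv q (m+r+e) * qinv q (n+r+e)" for r
  define K where "K u r = qinv q (u-r) * qinv q (u+r+e)" for u r :: int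
  have BB': "(\<Sum>k\<in>{0..n}. c k * K k r) = w r * D r" for r
    using BB[OF l m n e, of r] unfolding c_def K_def w_def D_def by (simp add: mult_ac)
  have VV': "w r * K k r * K u r = qinv q (k+u+e) * (\<Sum>j\<in>{0..u}. w j * qinv q (k-j) * qinv q (u-j) * K j r)"
    if k: "k \<in> {0..n}" for k r
  proof -
    have k0: "k \<ge> 0" using k by simp
    have A: "(\<Sum>j\<in>{0..u}. w j * qinv q (k-j) * qinv q (u-j) * K j r) = qpoch q (k+u+e) * (w r * K k r * K u r)"
      using VV[OF k0 u e, of r] unfolding w_def K_def by (simp add: mult_ac)
    have B: "qpoch q (k+u+e) * qinv q (k+u+e) = 1" using qinv_qpoch k0 u e by simp
    have "qinv q (k+u+e) * (\<Sum>j\<in>{0..u}. w j * qinv q (k-j) * qinv q (u-j) * K j r) = (qpoch q (k+u+e) * qinv q (k+u+e)) * (w r * K k r * K u r)"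
      unfolding A by (simp only: mult_ac)
    thus ?thesis unfolding B by simp
  qed
  have U': "(\<Sum>r\<in>{-u-1..u}. g r * K j r) = (if j = 0 then 1 else 0)" if j: "j \<in> {0..u}" for j
    using unitU'[of j u e] j e unfolding g_def K_def by (simp add: mult_ac)
  have inner: "(\<Sum>r\<in>{-u-1..u}. g r * (w r * K k r * K u r)) = qinv q (k+u+e) * qinv q k * qinv q u"
    if k: "k \<in> {0..n}" for k
  proof -
    have "(\<Sum>r\<in>{-u-1..u}. g r * (w r * K k r * K u r))
       = (\<Sum>r\<in>{-u-1..u}. qinv q (k+u+e) * (\<Sum>j\<in>{0..u}. w j * qinv q (k-j) * qinv q (u-j) * (g r * K j r)))"
      using VV'[OF k] by (simp add: sum_distrib_left mult_ac)
    also have "\<dots> = qinv q (k+u+e) * (\<Sum>j\<in>{0..u}. w j * qinv q (k-j) * qinv q (u-j) * (\<Sum>r\<in>{-u-1..u}. g r * K j r))"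
      by (simp add: sum_distrib_left sum.swap[of _ "{-u-1..u}"])
    also have "\<dots> = qinv q (k+u+e) * (\<Sum>j\<in>{0..u}. if j = 0 then w j * qinv q (k-j) * qinv q (u-j) else 0)"
      by (intro arg_cong[where f="\<lambda>x. qinv q (k+u+e) * x"] sum.cong refl) (simp add: U')
    also have "\<dots> = qinv q (k+u+e) * (w 0 * qinv q k * qinv q u)"
      using u by (simp add: sum.delta)
    finally show ?thesis by (simp add: w_def mult_ac)
  qed
  have "(\<Sum>r\<in>{-u-1..u}. g r * w r * w r * qpoch q (l+m+e) * qpoch q (l+n+e) * qpoch q (m+n+e) * qpoch q u
       * qinv q (l-r) * qinv q (m-r) * qinv q (n-r) * qinv q (u-r) * qinv q (l+r+e) * qinv q (m+r+e) * qinv q (n+r+e) * qinv q (u+r+e))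
     = (\<Sum>r\<in>{-u-1..u}. qpoch q u * (g r * w r * K u r) * (w r * D r))"
    by (rule sum.cong[OF refl]) (simp add: D_def K_def mult_ac)
  also have "\<dots> = (\<Sum>r\<in>{-u-1..u}. qpoch q u * (\<Sum>k\<in>{0..n}. c k * (g r * (w r * K k r * K u r))))"
    unfolding BB'[symmetric] by (simp add: sum_distrib_left mult_ac)
  also have "\<dots> = qpoch q u * (\<Sum>k\<in>{0..n}. c k * (\<Sum>r\<in>{-u-1..u}. g r * (w r * K k r * K u r)))"
    by (simp add: sum_distrib_left sum.swap[of _ "{0..n}"])
  also have "\<dots> = qpoch q u * (\<Sum>k\<in>{0..n}. c k * (qinv q (k+u+e) * qinv q k * qinv q u))"
    using inner by simp
  also have "\<dots> = (\<Sum>k\<in>{0..n}. c k * qinv q k * qinv q (u+k+e)) * (qpoch q u * qinv q u)"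
    unfolding sum_distrib_left sum_distrib_right
    by (rule sum.cong[OF refl]) (simp add: add.commute[of _ u] mult_ac)
  also have "\<dots> = (\<Sum>k\<in>{0..n}. c k * qinv q k * qinv q (u+k+e))"
    using qinv_qpoch u by simp
  finally show ?thesis unfolding g_def w_def c_def by (simp add: mult_ac)
qed

end


lemma fin_sup:
  fixes f :: "'a \<Rightarrow> complex"
  assumes "finite A" and "\<And>x. x \<notin> A \<Longrightarrow> f x = 0"
  shows "f summable_on UNIV \<and> infsum f UNIV = sum f A"
proof
  have "f summable_on UNIV \<longleftrightarrow> f summable_on A"
    by (rule summable_on_cong_neutral) (use assms in auto)
  thus "f summable_on UNIV" using assms by simp
  have "infsum f UNIV = infsum f A"
    by (rule infsum_cong_neutral) (use assms in auto)
  thus "infsum f UNIV = sum f A" using assms by simp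
qed

context qc begin

lemma nat_to_int_sum:
  "(\<Sum>k\<in>{..n}. f (int k)) = (\<Sum>k\<in>{0..int n}. (f k :: complex))"
  by (rule sum.reindex_bij_witness[of _ nat int]) auto

lemma exp5a: "q powi ((5 * r^2 - r) div 2) = q powi ((r * r - r) div 2) * q powi (r * r + 0*r) * q powi (r * r + 0*r)"
proof -
  have "5 * r^2 - r = (r * r - r) + 0 + 2 * (2 * r * r)" by (simp add: power2_eq_square algebra_simps)
  hence "(5 * r^2 - r) div 2 = (r * r - r) div 2 + 0 div 2 + 2 * r * r"
    using div2_lin[OF even_sq[of r], of 0 "2*r*r"] by simp
  thus ?thesis by (simp add: pw[symmetric] algebra_simps)
qed

lemma exp5b: "q powi ((5 * r^2 + 3 * r) div 2) = q powi ((r * r - r) div 2) * q powi (r * r + 1*r) * q powi (r * r + 1*r)"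
proof -
  have "5 * r^2 + 3 * r = (r * r - r) + 0 + 2 * (2 * r * r + 2 * r)" by (simp add: power2_eq_square algebra_simps)
  hence "(5 * r^2 + 3 * r) div 2 = (r * r - r) div 2 + 0 div 2 + (2 * r * r + 2 * r)"
    using div2_lin[OF even_sq[of r], of 0 "2*r*r + 2*r"] by simp
  thus ?thesis by (simp add: pw[symmetric] algebra_simps)
qed

end


lemma assemble:
  fixes f :: "nat \<Rightarrow> complex" and g :: "int \<Rightarrow> complex"
  assumes fF: "\<And>k. f k = F (int k)" and fz: "\<And>k. n < k \<Longrightarrow> f k = 0"
    and gz: "\<And>r. r \<notin> {-int u-1..int u} \<Longrightarrow> g r = 0" and gG: "\<And>r. g r = Gm r"
    and eq: "(\<Sum>k\<in>{0..int n}. F k) = (\<Sum>r\<in>{-int u-1..int u}. Gm r)"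
  shows "f summable_on UNIV \<and> g summable_on UNIV \<and> infsum f UNIV = infsum g UNIV"
proof -
  have A: "f summable_on UNIV \<and> infsum f UNIV = sum f {..n}"
    by (rule fin_sup) (use fz in \<open>auto simp: not_le\<close>)
  have B: "g summable_on UNIV \<and> infsum g UNIV = sum g {-int u-1..int u}"
    by (rule fin_sup) (use gz in auto)
  have "sum f {..n} = (\<Sum>k\<in>{0..int n}. F k)"
    unfolding fF by (rule sum.reindex_bij_witness[of _ nat int]) auto
  moreover have "sum g {-int u-1..int u} = (\<Sum>r\<in>{-int u-1..int u}. Gm r)" using gG by simp
  ultimately show ?thesis using A B eq by simp
qed

context qc begin

lemma case0:
  fixes l m n u :: nat
  shows "(\<lambda>k::nat. q ^ (k^2) * qpoch q (int l + int m + int n - int k)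
            * qinv q (int k) * qinv q (int l - int k) * qinv q (int m - int k)
            * qinv q (int n - int k) * qinv q (int u + int k)) summable_on UNIV
       \<and> (\<lambda>k::int. (-1) powi k * q powi ((5 * k^2 - k) div 2)
            * qpoch q (int l + int m) * qpoch q (int l + int n) * qpoch q (int m + int n) * qpoch q (int u)
            * qinv q (int l - k) * qinv q (int m - k) * qinv q (int n - k) * qinv q (int u - k)
            * qinv q (int l + k) * qinv q (int m + k) * qinv q (int n + k) * qinv q (int u + k))
           summable_on UNIV
       \<and> (\<Sum>\<^sub>\<infinity>k::nat. q ^ (k^2) * qpoch q (int l + int m + int n - int k)
            * qinv q (int k) * qinv q (int l - int k) * qinv q (int m - int k)
            * qinv q (int n - int k) * qinv q (int u + int k))
         = (\<Sum>\<^sub>\<infinity>k::int. (-1) powi k * q powi ((5 * k^2 - k) div 2)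
            * qpoch q (int l + int m) * qpoch q (int l + int n) * qpoch q (int m + int n) * qpoch q (int u)
            * qinv q (int l - k) * qinv q (int m - k) * qinv q (int n - k) * qinv q (int u - k)
            * qinv q (int l + k) * qinv q (int m + k) * qinv q (int n + k) * qinv q (int u + k))"
proof (rule assemble[where F="(\<lambda>k. q powi (k * k + 0*k) * qpoch q (int l+int m+int n+0-k) * qinv q (int l-k) * qinv q (int m-k) * qinv q (int n-k) * qinv q k * qinv q (int u+k+0))" and Gm="(\<lambda>r. ((-1) powi r * q powi ((r * r - r) div 2)) * q powi (r * r + 0*r) * q powi (r * r + 0*r)
       * qpoch q (int l+int m+0) * qpoch q (int l+int n+0) * qpoch q (int m+int n+0) * qpoch q (int u)
       * qinv q (int l-r) * qinv q (int m-r) * qinv q (int n-r) * qinv q (int u-r) * qinv q (int l+r+0) * qinv q (int m+r+0) * qinv q (int n+r+0) * qinv q (int u+r+0))" and n=n and u=u])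
  show "(\<Sum>k\<in>{0..int n}. (\<lambda>k. q powi (k * k + 0*k) * qpoch q (int l+int m+int n+0-k) * qinv q (int l-k) * qinv q (int m-k) * qinv q (int n-k) * qinv q k * qinv q (int u+k+0)) k) = (\<Sum>r\<in>{-int u-1..int u}. (\<lambda>r. ((-1) powi r * q powi ((r * r - r) div 2)) * q powi (r * r + 0*r) * q powi (r * r + 0*r)
       * qpoch q (int l+int m+0) * qpoch q (int l+int n+0) * qpoch q (int m+int n+0) * qpoch q (int u)
       * qinv q (int l-r) * qinv q (int m-r) * qinv q (int n-r) * qinv q (int u-r) * qinv q (int l+r+0) * qinv q (int m+r+0) * qinv q (int n+r+0) * qinv q (int u+r+0)) r)"
    using MAIN[of "int l" "int m" "int n" "int u" 0] by simp
next
  fix k :: nat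
  have "int k * int k + 0 * int k = int (k^2)" by (simp add: power2_eq_square)
  hence "q powi (int k * int k + 0 * int k) = q ^ (k^2)" by (metis power_int_of_nat)
  thus "q ^ (k^2) * qpoch q (int l + int m + int n - int k)
            * qinv q (int k) * qinv q (int l - int k) * qinv q (int m - int k)
            * qinv q (int n - int k) * qinv q (int u + int k) = (\<lambda>k. q powi (k * k + 0*k) * qpoch q (int l+int m+int n+0-k) * qinv q (int l-k) * qinv q (int m-k) * qinv q (int n-k) * qinv q k * qinv q (int u+k+0)) (int k)"
    by (simp add: algebra_simps)
next
  fix k :: nat assume "n < k"
  thus "q ^ (k^2) * qpoch q (int l + int m + int n - int k)
            * qinv q (int k) * qinv q (int l - int k) * qinv q (int m - int k)
            * qinv q (int n - int k) * qinv q (int u + int k) = 0" by (simp add: qinv_neg)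
next
  fix r :: int assume "r \<notin> {-int u-1..int u}"
  thus "(-1) powi r * q powi ((5 * r^2 - r) div 2)
            * qpoch q (int l + int m) * qpoch q (int l + int n) * qpoch q (int m + int n) * qpoch q (int u)
            * qinv q (int l - r) * qinv q (int m - r) * qinv q (int n - r) * qinv q (int u - r)
            * qinv q (int l + r) * qinv q (int m + r) * qinv q (int n + r) * qinv q (int u + r) = 0"
    by (auto simp: qinv_neg)
next
  fix r :: int
  show "(-1) powi r * q powi ((5 * r^2 - r) div 2)
            * qpoch q (int l + int m) * qpoch q (int l + int n) * qpoch q (int m + int n) * qpoch q (int u)
            * qinv q (int l - r) * qinv q (int m - r) * qinv q (int n - r) * qinv q (int u - r)
            * qinv q (int l + r) * qinv q (int m + r) * qinv q (int n + r) * qinv q (int u + r) = (\<lambda>r. ((-1) powi r * q powi ((r * r - r) div 2)) * q powi (r * r + 0*r) * q powi (r * r + 0*r)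
       * qpoch q (int l+int m+0) * qpoch q (int l+int n+0) * qpoch q (int m+int n+0) * qpoch q (int u)
       * qinv q (int l-r) * qinv q (int m-r) * qinv q (int n-r) * qinv q (int u-r) * qinv q (int l+r+0) * qinv q (int m+r+0) * qinv q (int n+r+0) * qinv q (int u+r+0)) r"
    unfolding exp5a by (simp add: algebra_simps)
qed

lemma case1:
  fixes l m n u :: nat
  shows "(\<lambda>k::nat. q ^ (k^2 + k) * qpoch q (int l + int m + int n - int k + 1)
            * qinv q (int k) * qinv q (int l - int k) * qinv q (int m - int k)
            * qinv q (int n - int k) * qinv q (int u + int k + 1)) summable_on UNIV
       \<and> (\<lambda>k::int. (-1) powi k * q powi ((5 * k^2 + 3 * k) div 2)
            * qpoch q (int l + int m + 1) * qpoch q (int l + int n + 1) * qpoch q (int m + int n + 1) * qpoch q (int u)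
            * qinv q (int l - k) * qinv q (int m - k) * qinv q (int n - k) * qinv q (int u - k)
            * qinv q (int l + k + 1) * qinv q (int m + k + 1) * qinv q (int n + k + 1) * qinv q (int u + k + 1))
           summable_on UNIV
       \<and> (\<Sum>\<^sub>\<infinity>k::nat. q ^ (k^2 + k) * qpoch q (int l + int m + int n - int k + 1)
            * qinv q (int k) * qinv q (int l - int k) * qinv q (int m - int k)
            * qinv q (int n - int k) * qinv q (int u + int k + 1))
         = (\<Sum>\<^sub>\<infinity>k::int. (-1) powi k * q powi ((5 * k^2 + 3 * k) div 2)
            * qpoch q (int l + int m + 1) * qpoch q (int l + int n + 1) * qpoch q (int m + int n + 1) * qpoch q (int u)
            * qinv q (int l - k) * qinv q (int m - k) * qinv q (int n - k) * qinv q (int u - k)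
            * qinv q (int l + k + 1) * qinv q (int m + k + 1) * qinv q (int n + k + 1) * qinv q (int u + k + 1))"
proof (rule assemble[where F="(\<lambda>k. q powi (k * k + 1*k) * qpoch q (int l+int m+int n+1-k) * qinv q (int l-k) * qinv q (int m-k) * qinv q (int n-k) * qinv q k * qinv q (int u+k+1))" and Gm="(\<lambda>r. ((-1) powi r * q powi ((r * r - r) div 2)) * q powi (r * r + 1*r) * q powi (r * r + 1*r)
       * qpoch q (int l+int m+1) * qpoch q (int l+int n+1) * qpoch q (int m+int n+1) * qpoch q (int u)
       * qinv q (int l-r) * qinv q (int m-r) * qinv q (int n-r) * qinv q (int u-r) * qinv q (int l+r+1) * qinv q (int m+r+1) * qinv q (int n+r+1) * qinv q (int u+r+1))" and n=n and u=u])
  show "(\<Sum>k\<in>{0..int n}. (\<lambda>k. q powi (k * k + 1*k) * qpoch q (int l+int m+int n+1-k) * qinv q (int l-k) * qinv q (int m-k) * qinv q (int n-k) * qinv q k * qinv q (int u+k+1)) k) = (\<Sum>r\<in>{-int u-1..int u}. (\<lambda>r. ((-1) powi r * q powi ((r * r - r) div 2)) * q powi (r * r + 1*r) * q powi (r * r + 1*r)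
       * qpoch q (int l+int m+1) * qpoch q (int l+int n+1) * qpoch q (int m+int n+1) * qpoch q (int u)
       * qinv q (int l-r) * qinv q (int m-r) * qinv q (int n-r) * qinv q (int u-r) * qinv q (int l+r+1) * qinv q (int m+r+1) * qinv q (int n+r+1) * qinv q (int u+r+1)) r)"
    using MAIN[of "int l" "int m" "int n" "int u" 1] by simp
next
  fix k :: nat
  have "int k * int k + 1 * int k = int (k^2 + k)" by (simp add: power2_eq_square)
  hence "q powi (int k * int k + 1 * int k) = q ^ (k^2 + k)" by (metis power_int_of_nat)
  thus "q ^ (k^2 + k) * qpoch q (int l + int m + int n - int k + 1)
            * qinv q (int k) * qinv q (int l - int k) * qinv q (int m - int k)
            * qinv q (int n - int k) * qinv q (int u + int k + 1) = (\<lambda>k. q powi (k * k + 1*k) * qpoch q (int l+int m+int n+1-k) * qinv q (int l-k) * qinv q (int m-k) * qinv q (int n-k) * qinv q k * qinv q (int u+k+1)) (int k)"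
    by (simp add: algebra_simps)
next
  fix k :: nat assume "n < k"
  thus "q ^ (k^2 + k) * qpoch q (int l + int m + int n - int k + 1)
            * qinv q (int k) * qinv q (int l - int k) * qinv q (int m - int k)
            * qinv q (int n - int k) * qinv q (int u + int k + 1) = 0" by (simp add: qinv_neg)
next
  fix r :: int assume "r \<notin> {-int u-1..int u}"
  thus "(-1) powi r * q powi ((5 * r^2 + 3 * r) div 2)
            * qpoch q (int l + int m + 1) * qpoch q (int l + int n + 1) * qpoch q (int m + int n + 1) * qpoch q (int u)
            * qinv q (int l - r) * qinv q (int m - r) * qinv q (int n - r) * qinv q (int u - r)
            * qinv q (int l + r + 1) * qinv q (int m + r + 1) * qinv q (int n + r + 1) * qinv q (int u + r + 1) = 0"
    by (auto simp: qinv_neg)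
next
  fix r :: int
  show "(-1) powi r * q powi ((5 * r^2 + 3 * r) div 2)
            * qpoch q (int l + int m + 1) * qpoch q (int l + int n + 1) * qpoch q (int m + int n + 1) * qpoch q (int u)
            * qinv q (int l - r) * qinv q (int m - r) * qinv q (int n - r) * qinv q (int u - r)
            * qinv q (int l + r + 1) * qinv q (int m + r + 1) * qinv q (int n + r + 1) * qinv q (int u + r + 1) = (\<lambda>r. ((-1) powi r * q powi ((r * r - r) div 2)) * q powi (r * r + 1*r) * q powi (r * r + 1*r)
       * qpoch q (int l+int m+1) * qpoch q (int l+int n+1) * qpoch q (int m+int n+1) * qpoch q (int u)
       * qinv q (int l-r) * qinv q (int m-r) * qinv q (int n-r) * qinv q (int u-r) * qinv q (int l+r+1) * qinv q (int m+r+1) * qinv q (int n+r+1) * qinv q (int u+r+1)) r"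
    unfolding exp5b by (simp add: algebra_simps)
qed

end

theorem corollary5p3:
  fixes q :: complex and l m n u :: nat
  assumes "0 < norm q" and "norm q < 1"
  shows "(\<lambda>k::nat. q ^ (k^2) * qpoch q (int l + int m + int n - int k)
            * qinv q (int k) * qinv q (int l - int k) * qinv q (int m - int k)
            * qinv q (int n - int k) * qinv q (int u + int k)) summable_on UNIV
       \<and> (\<lambda>k::int. (-1) powi k * q powi ((5 * k^2 - k) div 2)
            * qpoch q (int l + int m) * qpoch q (int l + int n) * qpoch q (int m + int n) * qpoch q (int u)
            * qinv q (int l - k) * qinv q (int m - k) * qinv q (int n - k) * qinv q (int u - k)
            * qinv q (int l + k) * qinv q (int m + k) * qinv q (int n + k) * qinv q (int u + k))
           summable_on UNIV
       \<and> (\<Sum>\<^sub>\<infinity>k::nat. q ^ (k^2) * qpoch q (int l + int m + int n - int k)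
            * qinv q (int k) * qinv q (int l - int k) * qinv q (int m - int k)
            * qinv q (int n - int k) * qinv q (int u + int k))
         = (\<Sum>\<^sub>\<infinity>k::int. (-1) powi k * q powi ((5 * k^2 - k) div 2)
            * qpoch q (int l + int m) * qpoch q (int l + int n) * qpoch q (int m + int n) * qpoch q (int u)
            * qinv q (int l - k) * qinv q (int m - k) * qinv q (int n - k) * qinv q (int u - k)
            * qinv q (int l + k) * qinv q (int m + k) * qinv q (int n + k) * qinv q (int u + k))
       \<and> (\<lambda>k::nat. q ^ (k^2 + k) * qpoch q (int l + int m + int n - int k + 1)
            * qinv q (int k) * qinv q (int l - int k) * qinv q (int m - int k)
            * qinv q (int n - int k) * qinv q (int u + int k + 1)) summable_on UNIV
       \<and> (\<lambda>k::int. (-1) powi k * q powi ((5 * k^2 + 3 * k) div 2)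
            * qpoch q (int l + int m + 1) * qpoch q (int l + int n + 1) * qpoch q (int m + int n + 1) * qpoch q (int u)
            * qinv q (int l - k) * qinv q (int m - k) * qinv q (int n - k) * qinv q (int u - k)
            * qinv q (int l + k + 1) * qinv q (int m + k + 1) * qinv q (int n + k + 1) * qinv q (int u + k + 1))
           summable_on UNIV
       \<and> (\<Sum>\<^sub>\<infinity>k::nat. q ^ (k^2 + k) * qpoch q (int l + int m + int n - int k + 1)
            * qinv q (int k) * qinv q (int l - int k) * qinv q (int m - int k)
            * qinv q (int n - int k) * qinv q (int u + int k + 1))
         = (\<Sum>\<^sub>\<infinity>k::int. (-1) powi k * q powi ((5 * k^2 + 3 * k) div 2)
            * qpoch q (int l + int m + 1) * qpoch q (int l + int n + 1) * qpoch q (int m + int n + 1) * qpoch q (int u)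
            * qinv q (int l - k) * qinv q (int m - k) * qinv q (int n - k) * qinv q (int u - k)
            * qinv q (int l + k + 1) * qinv q (int m + k + 1) * qinv q (int n + k + 1) * qinv q (int u + k + 1))"
  proof -
  interpret qc q using assms by unfold_locales auto
  show ?thesis using case0[of l m n u] case1[of l m n u] by blast
qed


end
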